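(* Let $t,q\ge 0$ and $s_1,\dots,s_t\ge 2$ be integers, and let $G^*=K_1\vee (P_3\cup C_{s_1}\cup\cdots\cup C_{s_t}\cup qK_2)$, where $C_2$ denotes a digon, and let $n$ be the number of vertices of $G^*$. Then the least $Q$-eigenvalue satisfies $\sigma_n(G^* )<1$.
   Context: Multigraphs without loops are allowed: degree = number of incident edges; the $(u,v)$ entry of the adjacency matrix $A$ is the number of edges between $u$ and $v$; $C_2$ is the digon (two vertices joined by two parallel edges). $Q=A+D$ with $D$ the diagonal degree matrix, with eigenvalues $\sigma_1\ge\cdots\ge\sigma_n$. $P_3$ is the path on $3$ vertices; $K_1\vee H$ adds one vertex adjacent to all vertices of $H$; $\cup$ is disjoint union; $qK_2$ is $q$ disjoint edges. *)

theory Defs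
  imports "Jordan_Normal_Form.Char_Poly"
begin

text \<open>A loopless multigraph on vertex set {0..<n} is represented as a pair (n, E),
  where E is a list of (unordered) edges, each given as a pair of vertices;
  parallel edges are repeated list entries.\<close>

type_synonym mgraph = "nat \<times> (nat \<times> nat) list"

definition nverts :: "mgraph \<Rightarrow> nat" where
  "nverts G = fst G"

definition edges :: "mgraph \<Rightarrow> (nat \<times> nat) list" where
  "edges G = snd G"

definition mult :: "mgraph \<Rightarrow> nat \<Rightarrow> nat \<Rightarrow> nat" where
  "mult G u v = length (filter (\<lambda>e. e = (u, v) \<or> e = (v, u)) (edges G))"

definition degree :: "mgraph \<Rightarrow> nat \<Rightarrow> nat" where
  "degree G v = length (filter (\<lambda>e. fst e = v \<or> snd e = v) (edges G))"

definition adj_mat :: "mgraph \<Rightarrow> real mat" where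
  "adj_mat G = mat (nverts G) (nverts G) (\<lambda>(u, v). real (mult G u v))"

definition deg_mat :: "mgraph \<Rightarrow> real mat" where
  "deg_mat G = mat (nverts G) (nverts G) (\<lambda>(u, v). if u = v then real (degree G u) else 0)"

definition Q_mat :: "mgraph \<Rightarrow> real mat" where
  "Q_mat G = adj_mat G + deg_mat G"

definition least_eigenvalue :: "real mat \<Rightarrow> real" where
  "least_eigenvalue M = Min {k. eigenvalue M k}"

definition shift_edges :: "nat \<Rightarrow> (nat \<times> nat) list \<Rightarrow> (nat \<times> nat) list" where
  "shift_edges k E = map (\<lambda>(u, v). (u + k, v + k)) E"

definition dunion :: "mgraph \<Rightarrow> mgraph \<Rightarrow> mgraph" where
  "dunion G H = (nverts G + nverts H, edges G @ shift_edges (nverts G) (edges H))"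

definition dunion_list :: "mgraph list \<Rightarrow> mgraph" where
  "dunion_list Gs = foldr dunion Gs (0, [])"

text \<open>K_1 join H: new vertex 0 adjacent (by one edge) to every vertex of H.\<close>
definition cone :: "mgraph \<Rightarrow> mgraph" where
  "cone H = (nverts H + 1, shift_edges 1 (edges H) @ map (\<lambda>i. (0, i + 1)) [0..<nverts H])"

definition path3 :: mgraph where
  "path3 = (3, [(0, 1), (1, 2)])"

definition K2 :: mgraph where
  "K2 = (2, [(0, 1)])"

text \<open>Cycle C_s for s \<ge> 2; for s = 2 this yields edges (0,1),(1,0), i.e. the digon.\<close>
definition cycle :: "nat \<Rightarrow> mgraph" where
  "cycle s = (s, map (\<lambda>i. (i, (i + 1) mod s)) [0..<s])"

end

theory Submission
  imports Defs
begin

definition qv :: "(nat \<times> nat) list \<Rightarrow> (nat \<Rightarrow> real) \<Rightarrow> nat \<Rightarrow> real" where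
  "qv E v i = sum_list (map (\<lambda>(x,y). if x = i then v i + v y else if y = i then v i + v x else 0) E)"

lemma qv_Nil[simp]: "qv [] v i = 0" by (simp add: qv_def)
lemma qv_Cons[simp]: "qv ((x,y)#E) v i = (if x = i then v i + v y else if y = i then v i + v x else 0) + qv E v i"
  by (simp add: qv_def)
lemma qv_append[simp]: "qv (E1 @ E2) v i = qv E1 v i + qv E2 v i"
  by (simp add: qv_def)

lemma qv_shift: "qv (shift_edges k E) v i = (if i < k then 0 else qv E (\<lambda>j. v (j+k)) (i-k))"
  by (induction E) (auto simp: shift_edges_def)

lemma qv_out: "\<forall>(x,y)\<in>set E. x < N \<and> y < N \<Longrightarrow> N \<le> i \<Longrightarrow> qv E v i = 0"
  by (induction E) auto

lemma qv_cong: "\<forall>(x,y)\<in>set E. x < N \<and> y < N \<Longrightarrow> \<forall>j<N. v j = w j \<Longrightarrow> i < N \<Longrightarrow> qv E v i = qv E w i"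
  by (induction E) auto

definition eok :: "mgraph \<Rightarrow> bool" where
  "eok G = (\<forall>(x,y)\<in>set (edges G). x < nverts G \<and> y < nverts G)"

definition good :: "real \<Rightarrow> mgraph \<Rightarrow> (nat \<Rightarrow> real) \<Rightarrow> bool" where
  "good lam G y = (eok G \<and> (\<forall>j<nverts G. qv (edges G) y j = (lam - 1) * y j - 1))"

definition dun :: "(nat \<Rightarrow> real) \<Rightarrow> nat \<Rightarrow> (nat \<Rightarrow> real) \<Rightarrow> nat \<Rightarrow> real" where
  "dun y N z = (\<lambda>j. if j < N then y j else z (j - N))"

lemma nverts_dunion[simp]: "nverts (dunion G H) = nverts G + nverts H"
  by (simp add: dunion_def nverts_def)

lemma good_dunion:
  assumes "good lam G y" "good lam H z"
  shows "good lam (dunion G H) (dun y (nverts G) z)"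
proof -
  let ?N = "nverts G"
  have eG: "\<forall>(x,y)\<in>set (edges G). x < ?N \<and> y < ?N" using assms(1) by (simp add: good_def eok_def)
  have eH: "\<forall>(x,y)\<in>set (edges H). x < nverts H \<and> y < nverts H" using assms(2) by (simp add: good_def eok_def)
  have ed: "edges (dunion G H) = edges G @ shift_edges ?N (edges H)" by (simp add: dunion_def edges_def)
  have "eok (dunion G H)" using eG eH unfolding eok_def ed by (auto simp: shift_edges_def)
  moreover have "qv (edges (dunion G H)) (dun y ?N z) j = (lam - 1) * dun y ?N z j - 1"
    if j: "j < nverts (dunion G H)" for j
  proof (cases "j < ?N")
    case True
    have "qv (edges G) (dun y ?N z) j = qv (edges G) y j"
      by (rule qv_cong[OF eG _ True]) (simp add: dun_def)
    then show ?thesis using True assms(1) unfolding ed good_def by (simp add: qv_shift dun_def)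
  next
    case False
    have "qv (edges G) (dun y ?N z) j = 0" using qv_out[OF eG] False by simp
    moreover have "(\<lambda>i. dun y ?N z (i + ?N)) = z" by (auto simp: dun_def)
    ultimately show ?thesis using False j assms(2) unfolding ed good_def by (simp add: qv_shift dun_def)
  qed
  ultimately show ?thesis by (simp add: good_def)
qed

lemma sum_dun: "(\<Sum>j<N + M. dun y N z j) = (\<Sum>j<N. y j) + (\<Sum>j<M. z j)"
proof (induction M)
  case 0
  then show ?case by (simp add: dun_def)
next
  case (Suc M)
  then show ?case by (simp add: dun_def)
qed

lemma good_empty[simp]: "good lam (0, []) y"
  by (simp add: good_def eok_def nverts_def edges_def)

lemma good_K2: "d * (3 - lam) = -1 \<Longrightarrow> good lam K2 (\<lambda>_. d)"
  unfolding good_def eok_def K2_def nverts_def edges_def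
  by (auto simp: algebra_simps less_Suc_eq)

lemma good_path3: "b = (lam - 2) * a - 1 \<Longrightarrow> 2 * a + (3 - lam) * b + 1 = 0 \<Longrightarrow>
   good lam path3 (\<lambda>j. if j = 1 then b else a)"
  unfolding good_def eok_def path3_def nverts_def edges_def
  by (auto simp: algebra_simps less_Suc_eq)

lemma qv_cycle:
  assumes "s \<ge> 2" "j < s"
  shows "qv (edges (cycle s)) (\<lambda>_. c) j = 4 * c"
proof -
  define k where "k = (if j = 0 then s - 1 else j - 1)"
  have k: "k < s" using assms by (auto simp: k_def)
  have eq: "(Suc i mod s = j \<and> i \<noteq> j) \<longleftrightarrow> i = k" if "i < s" for i
  proof (cases "Suc i = s")
    case True
    then show ?thesis using assms that by (auto simp: k_def)
  next
    case False
    then have "Suc i mod s = Suc i" using that by simp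
    then show ?thesis using assms that False by (auto simp: k_def)
  qed
  have "qv (edges (cycle s)) (\<lambda>_. c) j =
     (\<Sum>i<s. if i = j then c + c else if Suc i mod s = j then c + c else 0)"
    by (simp add: qv_def cycle_def edges_def sum_set_upt_conv_sum_list_nat[symmetric] atLeast0LessThan
         o_def)
  also have "\<dots> = (\<Sum>i<s. (if i = j then c + c else 0) + (if i = k then c + c else 0))"
    by (rule sum.cong) (use eq in auto)
  also have "\<dots> = 4 * c" using assms k by (simp add: sum.distrib)
  finally show ?thesis .
qed

lemma good_cycle: assumes "s \<ge> 2" "c * (5 - lam) = -1" shows "good lam (cycle s) (\<lambda>_. c)"
proof -
  have "eok (cycle s)" using assms by (auto simp: eok_def cycle_def edges_def nverts_def)
  moreover have "qv (edges (cycle s)) (\<lambda>_. c) j = (lam - 1) * c - 1" if "j < nverts (cycle s)" for j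
    using qv_cycle[OF assms(1), of j c] that assms(2) by (simp add: cycle_def nverts_def algebra_simps)
  ultimately show ?thesis by (simp add: good_def)
qed

lemma good_cycles:
  assumes "\<forall>x\<in>set s. x \<ge> 2" "c * (5 - lam) = -1" "good lam R z"
  shows "good lam (foldr dunion (map cycle s) R) (dun (\<lambda>_. c) (sum_list s) z) \<and>
         nverts (foldr dunion (map cycle s) R) = sum_list s + nverts R"
  using assms(1)
proof (induction s)
  case Nil
  have "dun (\<lambda>_. c) 0 z = z" by (auto simp: dun_def)
  then show ?case using assms(3) by simp
next
  case (Cons x s)
  then have x: "x \<ge> 2" and IH: "good lam (foldr dunion (map cycle s) R) (dun (\<lambda>_. c) (sum_list s) z)"
     "nverts (foldr dunion (map cycle s) R) = sum_list s + nverts R" by auto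
  have nc: "nverts (cycle x) = x" by (simp add: cycle_def nverts_def)
  have "good lam (dunion (cycle x) (foldr dunion (map cycle s) R))
          (dun (\<lambda>_. c) (nverts (cycle x)) (dun (\<lambda>_. c) (sum_list s) z))"
    by (rule good_dunion[OF good_cycle[OF x assms(2)] IH(1)])
  moreover have "dun (\<lambda>_. c) x (dun (\<lambda>_. c) (sum_list s) z) = dun (\<lambda>_. c) (x + sum_list s) z"
    by (auto simp: dun_def fun_eq_iff)
  ultimately show ?case using IH(2) nc by simp
qed

lemma good_K2s:
  assumes "d * (3 - lam) = -1"
  shows "good lam (dunion_list (replicate q K2)) (\<lambda>_. d) \<and> nverts (dunion_list (replicate q K2)) = 2 * q"
proof (induction q)
  case 0
  then show ?case by (simp add: dunion_list_def nverts_def)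
next
  case (Suc q)
  have nk: "nverts K2 = 2" by (simp add: K2_def nverts_def)
  have e: "dunion_list (replicate (Suc q) K2) = dunion K2 (dunion_list (replicate q K2))"
    by (simp add: dunion_list_def)
  have "good lam (dunion K2 (dunion_list (replicate q K2))) (dun (\<lambda>_. d) (nverts K2) (\<lambda>_. d))"
    using good_dunion[OF good_K2[OF assms]] Suc by blast
  moreover have "dun (\<lambda>_. d) 2 (\<lambda>_. d) = (\<lambda>_. d)" by (auto simp: dun_def)
  ultimately show ?case using Suc nk e by simp
qed

lemma edge_piece:
  fixes v :: "nat \<Rightarrow> real"
  assumes "x < N" "y < N" "i < N"
  shows "(\<Sum>j<N. ((if (x,y) = (i,j) \<or> (x,y) = (j,i) then 1 else 0) +
            (if i = j then (if x = i \<or> y = i then 1 else 0) else 0)) * v j)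
     = (if x = i then v i + v y else if y = i then v i + v x else 0)"
proof -
  consider "x = i" | "x \<noteq> i" "y = i" | "x \<noteq> i" "y \<noteq> i" by blast
  then show ?thesis
  proof cases
    case 1
    have "(\<Sum>j<N. ((if (x,y) = (i,j) \<or> (x,y) = (j,i) then 1 else 0) +
            (if i = j then (if x = i \<or> y = i then 1 else 0) else 0)) * v j)
         = (\<Sum>j<N. (if j = y then v j else 0) + (if j = i then v j else 0))"
      by (rule sum.cong) (use 1 in auto)
    then show ?thesis using 1 assms by (simp add: sum.distrib)
  next
    case 2
    have "(\<Sum>j<N. ((if (x,y) = (i,j) \<or> (x,y) = (j,i) then 1 else 0) +
            (if i = j then (if x = i \<or> y = i then 1 else 0) else 0)) * v j)
         = (\<Sum>j<N. (if j = x then v j else 0) + (if j = i then v j else 0))"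
      by (rule sum.cong) (use 2 in auto)
    then show ?thesis using 2 assms by (simp add: sum.distrib)
  next
    case 3
    have "(\<Sum>j<N. ((if (x,y) = (i,j) \<or> (x,y) = (j,i) then 1 else 0) +
            (if i = j then (if x = i \<or> y = i then 1 else 0) else 0)) * v j)
         = (\<Sum>j<N. 0)"
      by (rule sum.cong) (use 3 in auto)
    then show ?thesis using 3 assms by simp
  qed
qed

lemma edges_sum:
  assumes "\<forall>(x,y)\<in>set E. x < N \<and> y < N" "i < N"
  shows "(\<Sum>j<N. (real (length (filter (\<lambda>e. e = (i,j) \<or> e = (j,i)) E)) +
            (if i = j then real (length (filter (\<lambda>e. fst e = i \<or> snd e = i) E)) else 0)) * v j)
     = qv E v i"
  using assms(1)
proof (induction E)
  case Nil
  then show ?case by (simp cong: if_cong)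
next
  case (Cons e E)
  obtain x y where e: "e = (x,y)" by (cases e)
  with Cons have xy: "x < N" "y < N" and IH: "(\<Sum>j<N. (real (length (filter (\<lambda>e. e = (i,j) \<or> e = (j,i)) E)) +
            (if i = j then real (length (filter (\<lambda>e. fst e = i \<or> snd e = i) E)) else 0)) * v j)
     = qv E v i" by auto
  have "(\<Sum>j<N. (real (length (filter (\<lambda>e. e = (i,j) \<or> e = (j,i)) (e#E))) +
            (if i = j then real (length (filter (\<lambda>e. fst e = i \<or> snd e = i) (e#E))) else 0)) * v j)
      = (\<Sum>j<N. ((if (x,y) = (i,j) \<or> (x,y) = (j,i) then 1 else 0) +
            (if i = j then (if x = i \<or> y = i then 1 else 0) else 0)) * v j
           + (real (length (filter (\<lambda>e. e = (i,j) \<or> e = (j,i)) E)) +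
            (if i = j then real (length (filter (\<lambda>e. fst e = i \<or> snd e = i) E)) else 0)) * v j)"
    by (rule sum.cong) (auto simp: e algebra_simps)
  also have "\<dots> = (if x = i then v i + v y else if y = i then v i + v x else 0) + qv E v i"
    by (simp only: sum.distrib edge_piece[OF xy assms(2)] IH)
  finally show ?case by (simp add: e)
qed

lemma Q_mult:
  assumes "eok G" "i < nverts G"
  shows "(Q_mat G *\<^sub>v vec (nverts G) v) $ i = qv (edges G) v i"
proof -
  have "(Q_mat G *\<^sub>v vec (nverts G) v) $ i = (\<Sum>j<nverts G. (real (mult G i j) +
            (if i = j then real (degree G i) else 0)) * v j)"
    using assms(2)
    by (simp add: Q_mat_def adj_mat_def deg_mat_def scalar_prod_def atLeast0LessThan algebra_simps)
  also have "\<dots> = qv (edges G) v i"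
    unfolding mult_def degree_def
    by (rule edges_sum) (use assms in \<open>auto simp: eok_def\<close>)
  finally show ?thesis .
qed

lemma cone_eig:
  assumes g: "good lam H y" and ap: "real (nverts H) + (\<Sum>j<nverts H. y j) = lam"
  shows "eigenvalue (Q_mat (cone H)) lam"
proof -
  let ?N = "nverts H"
  define v where "v = (\<lambda>i. if i = 0 then 1 else y (i - 1))"
  have nc: "nverts (cone H) = ?N + 1" by (simp add: cone_def nverts_def)
  have ec: "edges (cone H) = shift_edges 1 (edges H) @ map (\<lambda>i. (0, i + 1)) [0..<?N]"
    by (simp add: cone_def edges_def)
  have eH: "\<forall>(x,y)\<in>set (edges H). x < ?N \<and> y < ?N" using g by (simp add: good_def eok_def)
  have eok: "eok (cone H)" using eH unfolding eok_def nc ec by (auto simp: shift_edges_def)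
  have vs: "(\<lambda>j. v (Suc j)) = y" by (auto simp: v_def)
  have qm: "qv (map (\<lambda>i. (0, i + 1)) [0..<?N]) v i =
      (\<Sum>k<?N. if i = 0 then v i + v (Suc k) else if Suc k = i then v i + v 0 else 0)" for i
    by (simp add: qv_def sum_set_upt_conv_sum_list_nat[symmetric] atLeast0LessThan o_def)
  have key: "qv (edges (cone H)) v i = lam * v i" if i: "i < ?N + 1" for i
  proof (cases i)
    case 0
    have "qv (edges (cone H)) v i = (\<Sum>k<?N. 1 + y k)"
      unfolding ec qv_append qm using 0 by (simp add: qv_shift v_def)
    also have "\<dots> = lam" using ap by (simp add: sum.distrib)
    finally show ?thesis using 0 by (simp add: v_def)
  next
    case (Suc j)
    have j: "j < ?N" using i Suc by simp
    have "(\<Sum>k<?N. if i = 0 then v i + v (Suc k) else if Suc k = i then v i + v 0 else 0)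
        = (\<Sum>k<?N. if k = j then y j + 1 else 0)"
      by (rule sum.cong) (auto simp: Suc v_def)
    also have "\<dots> = y j + 1" using j by simp
    finally have "qv (edges (cone H)) v i = qv (edges H) y j + (y j + 1)"
      unfolding ec qv_append qm using Suc by (simp add: qv_shift vs)
    also have "\<dots> = lam * v i" using g j by (simp add: good_def Suc v_def algebra_simps)
    finally show ?thesis .
  qed
  have dims: "dim_row (Q_mat (cone H)) = ?N + 1"
    by (simp add: Q_mat_def adj_mat_def deg_mat_def nc)
  have "Q_mat (cone H) *\<^sub>v vec (?N + 1) v = lam \<cdot>\<^sub>v vec (?N + 1) v"
  proof (rule eq_vecI)
    fix i assume "i < dim_vec (lam \<cdot>\<^sub>v vec (?N + 1) v)"
    then have i: "i < ?N + 1" by simp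
    show "(Q_mat (cone H) *\<^sub>v vec (?N + 1) v) $ i = (lam \<cdot>\<^sub>v vec (?N + 1) v) $ i"
      using Q_mult[OF eok, of i v] key[OF i] i by (simp add: nc)
  qed (simp add: dims)
  moreover have "vec (?N + 1) v \<noteq> 0\<^sub>v (?N + 1)"
  proof
    assume "vec (?N + 1) v = 0\<^sub>v (?N + 1)"
    then have "vec (?N + 1) v $ 0 = 0\<^sub>v (?N + 1) $ 0" by simp
    then show False by (simp add: v_def)
  qed
  moreover have "vec (?N + 1) v \<in> carrier_vec (?N + 1)" by simp
  ultimately show ?thesis unfolding eigenvalue_def eigenvector_def dims
    by blast
qed

theorem lemma3p5:
  fixes t q :: nat and s :: "nat list"
  assumes "length s = t"
    and "\<forall>i<t. s ! i \<ge> 2"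
  shows "least_eigenvalue
           (Q_mat (cone (dunion_list (path3 # map cycle s @ replicate q K2)))) < 1"
proof -
  have s2: "\<forall>x\<in>set s. x \<ge> 2" using assms by (auto simp: in_set_conv_nth)
  define S where "S = real (sum_list s)"
  have S0: "S \<ge> 0" by (simp add: S_def)
  define g where "g = (\<lambda>x::real. (1-x)*(2-x) + x*(2-x)/(x-4) + (1-x)*(S*(4-x)/(5-x) + 2*real q*(2-x)/(3-x)))"
  have cont: "continuous_on {0..1} g" unfolding g_def
    by (auto intro!: continuous_intros)
  have g0: "g 0 > 0" using S0 unfolding g_def by (simp add: add_pos_nonneg)
  have g1: "g 1 < 0" unfolding g_def by simp
  obtain lam where lam: "0 \<le> lam" "lam \<le> 1" "g lam = 0"
    using IVT2'[of g 1 0 0, OF _ _ _ cont] g0 g1 by force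
  have l0: "lam \<noteq> 0" using lam g0 by auto
  have l1: "lam < 1" using lam g1 by (cases "lam = 1") auto
  define a where "a = (2 - lam) / ((1 - lam) * (lam - 4))"
  define b where "b = (lam - 2) * a - 1"
  define c where "c = -1 / (5 - lam)"
  define d where "d = -1 / (3 - lam)"
  have ha: "a * ((1 - lam) * (lam - 4)) = 2 - lam" using l1 lam unfolding a_def by simp
  have hc: "c * (5 - lam) = -1" using l1 unfolding c_def by simp
  have hd: "d * (3 - lam) = -1" using l1 unfolding d_def by simp
  have hb2: "2 * a + (3 - lam) * b + 1 = 0"
    unfolding b_def using ha by (simp add: algebra_simps) 
  define M where "M = foldr dunion (map cycle s) (dunion_list (replicate q K2))"
  have gM: "good lam M (dun (\<lambda>_. c) (sum_list s) (\<lambda>_. d))" and nM: "nverts M = sum_list s + 2 * q"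
    using good_cycles[OF s2 hc conjunct1[OF good_K2s[OF hd]]] conjunct2[OF good_K2s[OF hd, of q]]
    unfolding M_def by auto
  have HM: "dunion_list (path3 # map cycle s @ replicate q K2) = dunion path3 M"
    by (simp add: M_def dunion_list_def foldr_append)
  have n3: "nverts path3 = 3" by (simp add: path3_def nverts_def)
  define yv where "yv = dun (\<lambda>j. if j = 1 then b else a) 3 (dun (\<lambda>_. c) (sum_list s) (\<lambda>_. d))"
  have gH: "good lam (dunion path3 M) yv"
    using good_dunion[OF good_path3[OF b_def hb2] gM] n3 unfolding yv_def by simp
  have sumy: "(\<Sum>j<nverts (dunion path3 M). yv j) = 2 * a + b + S * c + 2 * real q * d"
    unfolding yv_def nverts_dunion n3 nM sum_dun
    by (simp add: S_def numeral_3_eq_3 lessThan_Suc)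
  have E: "3 + S + 2 * real q + (2 * a + b + S * c + 2 * real q * d) = lam"
  proof -
    have "(1 - lam) * (3 + S + 2 * real q + (2 * a + b + S * c + 2 * real q * d) - lam) = g lam"
    proof -
      have e1: "(1 - lam) * a = (2 - lam) / (lam - 4)" using ha l1 lam
        by (simp add: field_simps)
      have e2: "1 + c = (4 - lam) / (5 - lam)" using l1 unfolding c_def by (simp add: field_simps)
      have e3: "1 + d = (2 - lam) / (3 - lam)" using l1 unfolding d_def by (simp add: field_simps)
      have "(1 - lam) * (3 + S + 2 * real q + (2 * a + b + S * c + 2 * real q * d) - lam) =
          (1 - lam) * (2 - lam) + lam * ((1 - lam) * a) + (1 - lam) * (S * (1 + c) + 2 * real q * (1 + d))"
        unfolding b_def by (simp add: algebra_simps)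
      also have "\<dots> = (1 - lam) * (2 - lam) + lam * ((2 - lam) / (lam - 4)) + (1 - lam) * (S * ((4 - lam) / (5 - lam)) + 2 * real q * ((2 - lam) / (3 - lam)))"
        by (simp only: e1 e2 e3)
      also have "\<dots> = g lam" unfolding g_def by simp
      finally show ?thesis .
    qed
    then have "(1 - lam) * (3 + S + 2 * real q + (2 * a + b + S * c + 2 * real q * d) - lam) = 0"
      using lam by simp
    then show ?thesis using l1 by simp
  qed
  have ev: "eigenvalue (Q_mat (cone (dunion_list (path3 # map cycle s @ replicate q K2)))) lam"
    unfolding HM
  proof (rule cone_eig[OF gH])
    show "real (nverts (dunion path3 M)) + (\<Sum>j<nverts (dunion path3 M). yv j) = lam"
      using E sumy n3 nM by (simp add: S_def)
  qed
  define A where "A = Q_mat (cone (dunion_list (path3 # map cycle s @ replicate q K2)))"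
  have Ac: "A \<in> carrier_mat (dim_row A) (dim_row A)"
    by (simp add: A_def Q_mat_def adj_mat_def deg_mat_def)
  have "char_poly A \<noteq> 0"
    using degree_monic_char_poly[OF Ac] by auto
  then have fin: "finite {k. eigenvalue A k}"
    using eigenvalue_root_char_poly[OF Ac] poly_roots_finite by auto
  have "least_eigenvalue A \<le> lam"
    unfolding least_eigenvalue_def using fin ev A_def by (auto intro: Min_le)
  then show ?thesis using l1 A_def by simp
qed

end
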